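(* Let $(S^\Omega,\mathcal T)$ be a resource theory with a fair currency $\mathcal C$ (value function $\mathrm{Val}$) for a target $\mathcal S$. Then for all $V,W\in\mathcal S$ and every $\varepsilon>0$, $$\mathrm{Balance}(V\to W)\ge\mathrm{Yield}(V)-\mathrm{Cost}(W)-\varepsilon,$$ and the same holds with $\varepsilon=0$ when $\mathrm{Yield}(V)$ and $\mathrm{Cost}(W)$ are attained by currency elements. If moreover $\mathcal C$ is tight for both $V$ and $W$, then $$\mathrm{Balance}(V\to W)=\mathrm{Yield}(V)-\mathrm{Cost}(W)=\mathrm{Cost}(V)-\mathrm{Cost}(W).$$
   Context: A resource theory $(S^\Omega,\mathcal T)$ consists of a set $\Omega$, the specification space $S^\Omega$ of all non-empty subsets of $\Omega$ (resources), and a set $\mathcal T$ of maps $f:S^\Omega\to S^\Omega$ acting element-wise, $f(V)=\bigcup_{\nu\in V} f(\{\nu\})$. $V\to W$ iff some $f\in\mathcal T$ has $f(V)\subseteq W$; $\to$ is assumed to be a pre-order. $\mathcal C\subseteq S^\Omega$ is a currency for target $\mathcal S\subseteq S^\Omega$ if (Order) any two elements of $\mathcal C$ are comparable under $\to$ and $\Omega\in\mathcal C$; (Universality) $\Omega\in\mathcal S$ and every $V\in\mathcal S$ has $C,C'\in\mathcal C$ with $C\to V$, $V\to C'$. A value function $\mathrm{Val}:\mathcal C\to\mathbb R_{\ge0}$ satisfies $\mathrm{Val}(C')\ge\mathrm{Val}(C)\iff C'\to C$ and $\mathrm{Val}(\Omega)=0$; $c_{\sup}=\sup_{C\in\mathcal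 C}\mathrm{Val}(C)$ (possibly $\infty$). $\mathrm{Cost}(V)=\inf\{\mathrm{Val}(C): C\in\mathcal C,\ C\to V\}$, $\mathrm{Yield}(V)=\sup\{\mathrm{Val}(C): C\in\mathcal C,\ V\to C\}$. The currency is tight for $V$ if there is $C\in\mathcal C$ with $C\to V$ and $V\to C$. Independence: $C\cap V\ne\emptyset$ for all $C\in\mathcal C,V\in\mathcal S$, and $C\to C'$ implies $C\cap V\to C'\cap V$ for all $V\in\mathcal S$. Balance: $\mathrm{Balance}(V\to W\mid C)=\sup\{\mathrm{Val}(C')-\mathrm{Val}(C): C'\in\mathcal C,\ V\cap C\to W\cap C'\}$ (with $\sup\emptyset=-\infty$) and $\mathrm{Balance}(V\to W)=\sup_{C\in\mathcal C}\mathrm{Balance}(V\to W\mid C)$. Fairness: $\mathcal C$ is independent of $\mathcal S$, and for all $V,W\in\mathcal S$ and $C_1,C_2\in\mathcal C$ with $V\cap C_1\to W\cap C_2$, setting $\Delta=\mathrm{Val}(C_2)-\mathrm{Val}(C_1)$: (F1) for every $C_1'\in\mathcal C$ with $-\Delta\le\mathrm{Val}(C_1')<c_{\sup}-\Delta$ there is $C_2'\in\mathcal C$ with $V\cap C_1'\to W\cap C_2'$ and $\mathrm{Val}(C_2')-\mathrm{Val}(C_1')=\Delta$; (F2) for every $C_2'\in\mathcal C$ with $\Delta\le\mathrm{Val}(C_2')$ there is $C_1'\in\mathcal C$ with $V\cap C_1'\to W\cap C_2'$ and $\mathrm{Val}(C_2')-\mathrm{Val}(C_1')=\Delta$. *)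

theory Defs
  imports Main "HOL-Library.Extended_Real"
begin

definition spec_space :: "'a set \<Rightarrow> 'a set set" where
  "spec_space Om = {V. V \<subseteq> Om \<and> V \<noteq> {}}"

definition conv :: "('a set \<Rightarrow> 'a set) set \<Rightarrow> 'a set \<Rightarrow> 'a set \<Rightarrow> bool" where
  "conv T V W \<longleftrightarrow> (\<exists>f\<in>T. f V \<subseteq> W)"

definition resource_theory :: "'a set \<Rightarrow> ('a set \<Rightarrow> 'a set) set \<Rightarrow> bool" where
  "resource_theory Om T \<longleftrightarrow>
     (\<forall>f\<in>T. \<forall>V\<in>spec_space Om. f V \<in> spec_space Om \<and> f V = (\<Union>\<nu>\<in>V. f {\<nu>})) \<and>
     (\<forall>V\<in>spec_space Om. conv T V V) \<and>
     (\<forall>U\<in>spec_space Om. \<forall>V\<in>spec_space Om. \<forall>W\<in>spec_space Om.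
         conv T U V \<longrightarrow> conv T V W \<longrightarrow> conv T U W)"

definition currency ::
  "'a set \<Rightarrow> ('a set \<Rightarrow> 'a set) set \<Rightarrow> 'a set set \<Rightarrow> 'a set set \<Rightarrow> bool" where
  "currency Om T Cs Ss \<longleftrightarrow>
     Cs \<subseteq> spec_space Om \<and> Ss \<subseteq> spec_space Om \<and>
     (\<forall>C\<in>Cs. \<forall>C'\<in>Cs. conv T C C' \<or> conv T C' C) \<and> Om \<in> Cs \<and>
     Om \<in> Ss \<and> (\<forall>V\<in>Ss. (\<exists>C\<in>Cs. conv T C V) \<and> (\<exists>C'\<in>Cs. conv T V C'))"

definition value_function ::
  "'a set \<Rightarrow> ('a set \<Rightarrow> 'a set) set \<Rightarrow> 'a set set \<Rightarrow> ('a set \<Rightarrow> real) \<Rightarrow> bool" where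
  "value_function Om T Cs Val \<longleftrightarrow>
     (\<forall>C\<in>Cs. Val C \<ge> 0) \<and>
     (\<forall>C\<in>Cs. \<forall>C'\<in>Cs. Val C' \<ge> Val C \<longleftrightarrow> conv T C' C) \<and> Val Om = 0"

definition c_sup :: "'a set set \<Rightarrow> ('a set \<Rightarrow> real) \<Rightarrow> ereal" where
  "c_sup Cs Val = (SUP C\<in>Cs. ereal (Val C))"

definition Cost :: "('a set \<Rightarrow> 'a set) set \<Rightarrow> 'a set set \<Rightarrow> ('a set \<Rightarrow> real) \<Rightarrow> 'a set \<Rightarrow> ereal" where
  "Cost T Cs Val V = Inf {ereal (Val C) | C. C \<in> Cs \<and> conv T C V}"

definition Yield :: "('a set \<Rightarrow> 'a set) set \<Rightarrow> 'a set set \<Rightarrow> ('a set \<Rightarrow> real) \<Rightarrow> 'a set \<Rightarrow> ereal" where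
  "Yield T Cs Val V = Sup {ereal (Val C) | C. C \<in> Cs \<and> conv T V C}"

definition tight :: "('a set \<Rightarrow> 'a set) set \<Rightarrow> 'a set set \<Rightarrow> 'a set \<Rightarrow> bool" where
  "tight T Cs V \<longleftrightarrow> (\<exists>C\<in>Cs. conv T C V \<and> conv T V C)"

definition independent ::
  "('a set \<Rightarrow> 'a set) set \<Rightarrow> 'a set set \<Rightarrow> 'a set set \<Rightarrow> bool" where
  "independent T Cs Ss \<longleftrightarrow>
     (\<forall>C\<in>Cs. \<forall>V\<in>Ss. C \<inter> V \<noteq> {}) \<and>
     (\<forall>C\<in>Cs. \<forall>C'\<in>Cs. conv T C C' \<longrightarrow> (\<forall>V\<in>Ss. conv T (C \<inter> V) (C' \<inter> V)))"

text \<open>Balance, with Sup {} = -\<infinity> in ereal.\<close>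
definition Balance_given ::
  "('a set \<Rightarrow> 'a set) set \<Rightarrow> 'a set set \<Rightarrow> ('a set \<Rightarrow> real) \<Rightarrow> 'a set \<Rightarrow> 'a set \<Rightarrow> 'a set \<Rightarrow> ereal" where
  "Balance_given T Cs Val V W C =
     Sup {ereal (Val C' - Val C) | C'. C' \<in> Cs \<and> conv T (V \<inter> C) (W \<inter> C')}"

definition Balance ::
  "('a set \<Rightarrow> 'a set) set \<Rightarrow> 'a set set \<Rightarrow> ('a set \<Rightarrow> real) \<Rightarrow> 'a set \<Rightarrow> 'a set \<Rightarrow> ereal" where
  "Balance T Cs Val V W = (SUP C\<in>Cs. Balance_given T Cs Val V W C)"

definition fair ::
  "('a set \<Rightarrow> 'a set) set \<Rightarrow> 'a set set \<Rightarrow> 'a set set \<Rightarrow> ('a set \<Rightarrow> real) \<Rightarrow> bool" where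
  "fair T Cs Ss Val \<longleftrightarrow> independent T Cs Ss \<and>
     (\<forall>V\<in>Ss. \<forall>W\<in>Ss. \<forall>C1\<in>Cs. \<forall>C2\<in>Cs. conv T (V \<inter> C1) (W \<inter> C2) \<longrightarrow>
        (let \<Delta> = Val C2 - Val C1 in
          (\<forall>C1'\<in>Cs. - \<Delta> \<le> Val C1' \<and> ereal (Val C1') < c_sup Cs Val - ereal \<Delta> \<longrightarrow>
              (\<exists>C2'\<in>Cs. conv T (V \<inter> C1') (W \<inter> C2') \<and> Val C2' - Val C1' = \<Delta>)) \<and>
          (\<forall>C2'\<in>Cs. \<Delta> \<le> Val C2' \<longrightarrow>
              (\<exists>C1'\<in>Cs. conv T (V \<inter> C1') (W \<inter> C2') \<and> Val C2' - Val C1' = \<Delta>))))"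

end

theory Submission
  imports Defs
begin

context
  fixes Om :: "'a set" and T :: "('a set \<Rightarrow> 'a set) set"
    and Cs Ss :: "'a set set" and Val :: "'a set \<Rightarrow> real"
  assumes RT: "resource_theory Om T"
    and CU: "currency Om T Cs Ss"
    and VF: "value_function Om T Cs Val"
    and FA: "fair T Cs Ss Val"
begin

lemma trans': "U \<in> spec_space Om \<Longrightarrow> V \<in> spec_space Om \<Longrightarrow> W \<in> spec_space Om
  \<Longrightarrow> conv T U V \<Longrightarrow> conv T V W \<Longrightarrow> conv T U W"
  using RT unfolding resource_theory_def by blast

lemma CsS: "C \<in> Cs \<Longrightarrow> C \<in> spec_space Om" using CU unfolding currency_def by blast
lemma SsS: "C \<in> Ss \<Longrightarrow> C \<in> spec_space Om" using CU unfolding currency_def by blast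
lemma OmC: "Om \<in> Cs" using CU unfolding currency_def by blast
lemma OmS: "Om \<in> Ss" using CU unfolding currency_def by blast
lemma ValOm: "Val Om = 0" using VF unfolding value_function_def by blast
lemma Valnn: "C \<in> Cs \<Longrightarrow> Val C \<ge> 0" using VF unfolding value_function_def by blast
lemma Valconv: "C \<in> Cs \<Longrightarrow> C' \<in> Cs \<Longrightarrow> Val C' \<ge> Val C \<longleftrightarrow> conv T C' C"
  using VF unfolding value_function_def by blast

lemma int_spec: assumes "C \<in> Cs" "X \<in> Ss" shows "X \<inter> C \<in> spec_space Om"
proof -
  have "independent T Cs Ss" using FA unfolding fair_def by (rule conjunct1)
  then have "\<forall>C\<in>Cs. \<forall>V\<in>Ss. C \<inter> V \<noteq> {}" unfolding independent_def by (rule conjunct1)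
  then have "C \<inter> X \<noteq> {}" using assms by blast
  then have "X \<inter> C \<noteq> {}" by (simp add: Int_commute)
  moreover have "X \<subseteq> Om" using SsS[OF assms(2)] unfolding spec_space_def by blast
  ultimately show ?thesis unfolding spec_space_def by blast
qed

lemma subOm: "X \<in> spec_space Om \<Longrightarrow> X \<inter> Om = X" "X \<in> spec_space Om \<Longrightarrow> Om \<inter> X = X"
  unfolding spec_space_def by auto

lemma F1: "X \<in> Ss \<Longrightarrow> Y \<in> Ss \<Longrightarrow> C1 \<in> Cs \<Longrightarrow> C2 \<in> Cs \<Longrightarrow> conv T (X \<inter> C1) (Y \<inter> C2)
  \<Longrightarrow> C1' \<in> Cs \<Longrightarrow> - (Val C2 - Val C1) \<le> Val C1'
  \<Longrightarrow> ereal (Val C1') < c_sup Cs Val - ereal (Val C2 - Val C1)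
  \<Longrightarrow> \<exists>C2'\<in>Cs. conv T (X \<inter> C1') (Y \<inter> C2') \<and> Val C2' - Val C1' = Val C2 - Val C1"
  using FA unfolding fair_def Let_def by blast

lemma F2: "X \<in> Ss \<Longrightarrow> Y \<in> Ss \<Longrightarrow> C1 \<in> Cs \<Longrightarrow> C2 \<in> Cs \<Longrightarrow> conv T (X \<inter> C1) (Y \<inter> C2)
  \<Longrightarrow> C2' \<in> Cs \<Longrightarrow> Val C2 - Val C1 \<le> Val C2'
  \<Longrightarrow> \<exists>C1'\<in>Cs. conv T (X \<inter> C1') (Y \<inter> C2') \<and> Val C2' - Val C1' = Val C2 - Val C1"
  using FA unfolding fair_def Let_def by blast

lemma unbounded:
  assumes "C \<in> Cs" "Val C > 0"
  shows "c_sup Cs Val = \<infinity>"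
proof -
  have "conv T C Om" using Valconv[OF OmC assms(1)] ValOm assms(2) by simp
  then have conv0: "conv T (Om \<inter> C) (Om \<inter> Om)"
    using subOm(2)[OF CsS[OF assms(1)]] by simp
  have step: "\<exists>C''\<in>Cs. Val C'' = Val C' + Val C" if "C' \<in> Cs" for C'
  proof -
    have "Val Om - Val C \<le> Val C'" using ValOm Valnn[OF that] assms by simp
    from F2[OF OmS OmS assms(1) OmC conv0 that this] ValOm show ?thesis by force
  qed
  have "\<exists>C'\<in>Cs. Val C' \<ge> real n * Val C" for n
  proof (induction n)
    case 0 then show ?case using OmC ValOm by force
  next
    case (Suc n)
    then obtain C' where "C' \<in> Cs" "Val C' \<ge> real n * Val C" by blast
    with step obtain C'' where "C'' \<in> Cs" "Val C'' = Val C' + Val C" by blast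
    then show ?case using \<open>Val C' \<ge> real n * Val C\<close> \<open>C'' \<in> Cs\<close>
      by (intro bexI[of _ C'']) (auto simp: algebra_simps)
  qed
  note big = this
  have "\<exists>C'\<in>Cs. x < ereal (Val C')" if xl: "x < \<infinity>" for x
  proof -
    obtain r :: real where r: "x \<le> ereal r" using xl by (cases x) auto
    obtain n :: nat where "(r + 1) / Val C \<le> n" using real_arch_simple by blast
    then have "r + 1 \<le> real n * Val C" using assms by (simp add: divide_le_eq)
    obtain C' where C': "C' \<in> Cs" "Val C' \<ge> real n * Val C" using big[of n] by blast
    have "x < ereal (Val C')" using r C'(2) \<open>r + 1 \<le> real n * Val C\<close> by (cases x) auto
    then show ?thesis using C'(1) by blast
  qed
  then have "\<forall>x<top. \<exists>C\<in>Cs. x < ereal (Val C)" unfolding top_ereal_def by blast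
  then have eq: "(SUP C\<in>Cs. ereal (Val C)) = top"
    using SUP_eq_top_iff by blast
  show ?thesis unfolding c_sup_def eq top_ereal_def by (rule refl)
qed

lemma dich: "(\<forall>C\<in>Cs. Val C = 0) \<or> c_sup Cs Val = \<infinity>"
proof (rule disjCI)
  assume "c_sup Cs Val \<noteq> \<infinity>"
  show "\<forall>C\<in>Cs. Val C = 0" proof
    fix C assume "C \<in> Cs"
    have "Val C \<ge> 0" using Valnn \<open>C \<in> Cs\<close> by blast
    moreover have "\<not> Val C > 0" using unbounded[OF \<open>C \<in> Cs\<close>] \<open>c_sup Cs Val \<noteq> \<infinity>\<close> by blast
    ultimately show "Val C = 0" by linarith
  qed
qed

lemma Bal_ge:
  assumes "V \<in> Ss" "W \<in> Ss" "C1 \<in> Cs" "C2 \<in> Cs" "conv T (V \<inter> C1) (W \<inter> C2)"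
  shows "ereal (Val C2 - Val C1) \<le> Balance T Cs Val V W"
proof -
  have "ereal (Val C2 - Val C1) \<le> Balance_given T Cs Val V W C1"
    unfolding Balance_given_def using assms by (intro Sup_upper) blast
  then show ?thesis unfolding Balance_def using assms(3) by (rule SUP_upper2[rotated])
qed

lemma key:
  assumes V: "V \<in> Ss" and W: "W \<in> Ss" and CV: "CV \<in> Cs" "conv T V CV"
    and CW: "CW \<in> Cs" "conv T CW W"
  shows "\<exists>C1\<in>Cs. \<exists>C2\<in>Cs. conv T (V \<inter> C1) (W \<inter> C2) \<and> Val C2 - Val C1 = Val CV - Val CW"
proof -
  have sV: "V \<in> spec_space Om" and sW: "W \<in> spec_space Om" using V W SsS by auto
  have sCV: "CV \<in> spec_space Om" and sCW: "CW \<in> spec_space Om" using CV CW CsS by auto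
  have c1: "conv T (V \<inter> Om) (Om \<inter> CV)" using CV subOm sV sCV by simp
  have c2: "conv T (Om \<inter> CW) (W \<inter> Om)" using CW subOm sW sCW by simp
  show ?thesis
  proof (cases "\<forall>C\<in>Cs. Val C = 0")
    case True
    have "conv T CV Om" using Valconv[OF OmC CV(1)] Valnn[OF CV(1)] ValOm by simp
    moreover have "conv T Om CW" using Valconv[OF CW(1) OmC] True CW ValOm by simp
    ultimately have "conv T V W"
      using trans' CV CW sV sW sCV sCW CsS OmC by meson
    then show ?thesis using OmC True CV CW subOm sV sW by (intro bexI[of _ Om]) auto
  next
    case False
    then have inf: "c_sup Cs Val = \<infinity>" using dich by blast
    show ?thesis
    proof (cases "Val CV < Val CW")
      case True
      have "Val CV - Val Om \<le> Val CW" using True ValOm by simp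
      from F2[OF V OmS OmC CV(1) c1 CW(1) this] obtain C1' where
        C1': "C1' \<in> Cs" "conv T (V \<inter> C1') (Om \<inter> CW)" "Val CW - Val C1' = Val CV - Val Om" by blast
      have "conv T (V \<inter> C1') (W \<inter> Om)"
        using trans'[OF int_spec[OF C1'(1) V] _ _ C1'(2) c2] subOm sCW sW CsS[OF CW(1)] by simp
      then show ?thesis using C1' OmC ValOm by (intro bexI[of _ C1'] bexI[of _ Om]) auto
    next
      case False
      have "- (Val Om - Val CW) \<le> Val CV" using False ValOm by simp
      moreover have "ereal (Val CV) < c_sup Cs Val - ereal (Val Om - Val CW)" using inf by simp
      ultimately obtain C2' where C2': "C2' \<in> Cs" "conv T (Om \<inter> CV) (W \<inter> C2')"
          "Val C2' - Val CV = Val Om - Val CW"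
        using F1[OF OmS W CW(1) OmC c2 CV(1)] by blast
      have "conv T (V \<inter> Om) (W \<inter> C2')"
        using trans'[OF int_spec[OF OmC V] _ int_spec[OF C2'(1) W] c1 C2'(2)] subOm sCV by simp
      then show ?thesis using C2' OmC ValOm by (intro bexI[of _ Om] bexI[of _ C2']) auto
    qed
  qed
qed

lemma Cost_real:
  assumes "W \<in> Ss"
  shows "\<exists>c0. Cost T Cs Val W = ereal c0"
proof -
  obtain C where C: "C \<in> Cs" "conv T C W" using CU assms unfolding currency_def by blast
  have "Cost T Cs Val W \<le> ereal (Val C)" unfolding Cost_def using C by (intro Inf_lower) blast
  moreover have "Cost T Cs Val W \<ge> 0" unfolding Cost_def using Valnn by (intro Inf_greatest) auto
  ultimately show ?thesis by (cases "Cost T Cs Val W") auto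
qed

lemma main_ge:
  assumes V: "V \<in> Ss" and W: "W \<in> Ss"
  shows "Yield T Cs Val V - Cost T Cs Val W \<le> Balance T Cs Val V W"
proof -
  obtain c0 where c0: "Cost T Cs Val W = ereal c0" using Cost_real[OF W] by blast
  obtain CW where CW: "CW \<in> Cs" "conv T CW W" using CU W unfolding currency_def by blast
  obtain CV where CV: "CV \<in> Cs" "conv T V CV" using CU V unfolding currency_def by blast
  let ?B = "Balance T Cs Val V W"
  have pair: "ereal (Val CV' - Val CW') \<le> ?B" if "CV' \<in> Cs" "conv T V CV'" "CW' \<in> Cs" "conv T CW' W"
    for CV' CW'
    using key[OF V W that] Bal_ge[OF V W] by force
  show ?thesis
  proof (cases ?B)
    case PInf then show ?thesis by simp
  next
    case MInf then show ?thesis using pair[OF CV CW] by simp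
  next
    case (real b)
    have "Yield T Cs Val V \<le> ereal (b + c0)"
      unfolding Yield_def
    proof (intro Sup_least, clarify)
      fix C assume C: "C \<in> Cs" "conv T V C"
      have "ereal (Val C - b) \<le> Cost T Cs Val W" unfolding Cost_def
      proof (intro Inf_greatest, clarify)
        fix C' assume "C' \<in> Cs" "conv T C' W"
        from pair[OF C this] real show "ereal (Val C - b) \<le> ereal (Val C')" by simp
      qed
      then show "ereal (Val C) \<le> ereal (b + c0)" using c0 by simp
    qed
    then show ?thesis using c0 real
      by (cases "Yield T Cs Val V") auto
  qed
qed

lemma tight_vals:
  assumes "tight T Cs V" and VS: "V \<in> Ss"
  obtains C0 where "C0 \<in> Cs" "Yield T Cs Val V = ereal (Val C0)" "Cost T Cs Val V = ereal (Val C0)"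
    "conv T C0 V" "conv T V C0"
proof -
  obtain C0 where C0: "C0 \<in> Cs" "conv T C0 V" "conv T V C0" using assms unfolding tight_def by blast
  have sV: "V \<in> spec_space Om" using SsS[OF VS] .
  have mem1: "ereal (Val C0) \<in> {ereal (Val C) |C. C \<in> Cs \<and> conv T V C}" using C0 by blast
  have ub1: "x \<le> ereal (Val C0)" if xin: "x \<in> {ereal (Val C) |C. C \<in> Cs \<and> conv T V C}" for x
  proof -
    obtain C where C: "x = ereal (Val C)" "C \<in> Cs" "conv T V C" using xin by blast
    have "conv T C0 C" using trans'[OF CsS[OF C0(1)] sV CsS[OF C(2)] C0(2) C(3)] .
    then show "x \<le> ereal (Val C0)" using Valconv[OF C(2) C0(1)] C(1) by simp
  qed
  have Y: "Yield T Cs Val V = ereal (Val C0)" unfolding Yield_def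
    by (rule antisym[OF Sup_least[OF ub1] Sup_upper[OF mem1]])
  have mem2: "ereal (Val C0) \<in> {ereal (Val C) |C. C \<in> Cs \<and> conv T C V}" using C0 by blast
  have lb2: "ereal (Val C0) \<le> x" if xin: "x \<in> {ereal (Val C) |C. C \<in> Cs \<and> conv T C V}" for x
  proof -
    obtain C where C: "x = ereal (Val C)" "C \<in> Cs" "conv T C V" using xin by blast
    have "conv T C C0" using trans'[OF CsS[OF C(2)] sV CsS[OF C0(1)] C(3) C0(3)] .
    then show "ereal (Val C0) \<le> x" using Valconv[OF C0(1) C(2)] C(1) by simp
  qed
  have Co: "Cost T Cs Val V = ereal (Val C0)" unfolding Cost_def
    by (rule antisym[OF Inf_lower[OF mem2] Inf_greatest[OF lb2]])
  show ?thesis using that C0 Y Co by blast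
qed

lemma upper:
  assumes V: "V \<in> Ss" and W: "W \<in> Ss" and CV: "CV \<in> Cs" "conv T CV V"
    and CW: "CW \<in> Cs" "conv T W CW"
    and C1: "C1 \<in> Cs" and C2: "C2 \<in> Cs" and cv: "conv T (V \<inter> C1) (W \<inter> C2)"
  shows "Val C2 - Val C1 \<le> Val CV - Val CW"
proof (cases "\<forall>C\<in>Cs. Val C = 0")
  case True then show ?thesis using CV CW C1 C2 by simp
next
  case False
  then have inf: "c_sup Cs Val = \<infinity>" using dich by blast
  have sV: "V \<in> spec_space Om" and sW: "W \<in> spec_space Om" using V W SsS by auto
  have sCV: "CV \<in> spec_space Om" and sCW: "CW \<in> spec_space Om" using CV CW CsS by auto
  have c1: "conv T (Om \<inter> CV) (V \<inter> Om)" using CV subOm sV sCV by simp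
  have c2: "conv T (W \<inter> Om) (Om \<inter> CW)" using CW subOm sW sCW by simp
  have "Val Om - Val CV \<le> Val C1" using ValOm Valnn[OF CV(1)] Valnn[OF C1] by simp
  from F2[OF OmS V CV(1) OmC c1 C1 this] obtain A where
    A: "A \<in> Cs" "conv T (Om \<inter> A) (V \<inter> C1)" "Val C1 - Val A = Val Om - Val CV" by blast
  have "- (Val CW - Val Om) \<le> Val C2" using ValOm Valnn[OF CW(1)] Valnn[OF C2] by simp
  moreover have "ereal (Val C2) < c_sup Cs Val - ereal (Val CW - Val Om)" using inf by simp
  ultimately obtain B where B: "B \<in> Cs" "conv T (W \<inter> C2) (Om \<inter> B)" "Val B - Val C2 = Val CW - Val Om"
    using F1[OF W OmS OmC CW(1) c2 C2] by blast
  have sA: "Om \<inter> A \<in> spec_space Om" and sB: "Om \<inter> B \<in> spec_space Om"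
    using int_spec A B OmS by (auto simp: Int_commute)
  have "conv T (Om \<inter> A) (W \<inter> C2)"
    using trans'[OF sA int_spec[OF C1 V] int_spec[OF C2 W] A(2) cv] .
  then have "conv T (Om \<inter> A) (Om \<inter> B)"
    using trans'[OF sA int_spec[OF C2 W] sB _ B(2)] by blast
  then have "conv T A B" using subOm CsS A B by simp
  then have "Val A \<ge> Val B" using Valconv[OF B(1) A(1)] by simp
  then show ?thesis using A B ValOm by simp
qed

end

theorem mainTheorem10:
  fixes Om :: "'a set" and T :: "('a set \<Rightarrow> 'a set) set"
    and Cs Ss :: "'a set set" and Val :: "'a set \<Rightarrow> real"
  assumes "resource_theory Om T"
    and "currency Om T Cs Ss"
    and "value_function Om T Cs Val"
    and "fair T Cs Ss Val"
    and "V \<in> Ss" and "W \<in> Ss"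
  shows "(\<forall>\<epsilon>::real. \<epsilon> > 0 \<longrightarrow>
            Balance T Cs Val V W \<ge> Yield T Cs Val V - Cost T Cs Val W - ereal \<epsilon>)
    \<and> ((\<exists>C\<in>Cs. conv T V C \<and> ereal (Val C) = Yield T Cs Val V) \<and>
        (\<exists>C\<in>Cs. conv T C W \<and> ereal (Val C) = Cost T Cs Val W) \<longrightarrow>
        Balance T Cs Val V W \<ge> Yield T Cs Val V - Cost T Cs Val W)
    \<and> (tight T Cs V \<and> tight T Cs W \<longrightarrow>
        Balance T Cs Val V W = Yield T Cs Val V - Cost T Cs Val W \<and>
        Yield T Cs Val V - Cost T Cs Val W = Cost T Cs Val V - Cost T Cs Val W)"
proof -
  note ge = main_ge[OF assms]
  have P1: "Balance T Cs Val V W \<ge> Yield T Cs Val V - Cost T Cs Val W - ereal \<epsilon>" if "\<epsilon> > 0" for \<epsilon> :: real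
  proof -
    obtain c0 where c0: "Cost T Cs Val W = ereal c0" using Cost_real[OF assms(1-4,6)] by blast
    have "Yield T Cs Val V - Cost T Cs Val W - ereal \<epsilon> \<le> Yield T Cs Val V - Cost T Cs Val W"
      using that c0 by (cases "Yield T Cs Val V") auto
    then show ?thesis using ge by (rule order_trans)
  qed
  have P3: "Balance T Cs Val V W = Yield T Cs Val V - Cost T Cs Val W \<and>
        Yield T Cs Val V - Cost T Cs Val W = Cost T Cs Val V - Cost T Cs Val W"
    if tV: "tight T Cs V" and tW: "tight T Cs W"
  proof -
    obtain CV where CV: "CV \<in> Cs" "Yield T Cs Val V = ereal (Val CV)" "Cost T Cs Val V = ereal (Val CV)"
      "conv T CV V" "conv T V CV" using tight_vals[OF assms(1-4) tV assms(5)] by blast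
    obtain CW where CW: "CW \<in> Cs" "Yield T Cs Val W = ereal (Val CW)" "Cost T Cs Val W = ereal (Val CW)"
      "conv T CW W" "conv T W CW" using tight_vals[OF assms(1-4) tW assms(6)] by blast
    have "Balance T Cs Val V W \<le> ereal (Val CV - Val CW)"
      unfolding Balance_def Balance_given_def
    proof (intro SUP_least Sup_least, clarify)
      fix C1 C2 assume "C1 \<in> Cs" "C2 \<in> Cs" "conv T (V \<inter> C1) (W \<inter> C2)"
      then show "ereal (Val C2 - Val C1) \<le> ereal (Val CV - Val CW)"
        using upper[OF assms(1-6) CV(1,4) CW(1,5)] by simp
    qed
    then have up: "Balance T Cs Val V W \<le> ereal (Val CV) - ereal (Val CW)" by simp
    have e: "Yield T Cs Val V - Cost T Cs Val W = ereal (Val CV) - ereal (Val CW)"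
      using CV(2) CW(3) by simp
    have "Balance T Cs Val V W = Yield T Cs Val V - Cost T Cs Val W"
      using up ge unfolding e by (rule antisym)
    then show ?thesis using e CV(3) CW(3) by simp
  qed
  show ?thesis using P1 ge P3 by blast
qed

end
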